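(* Let $d_1,\dots,d_n$ be positive integers with $d=\sum_id_i\ge2$, and let $(p_1,p_2)$ be either $(s,0)$ with $s\in[0,1]$ or $(1,s)$ with $s\in(0,1]$. Then the unique pair $(\lambda,y)\in\mathbb{R}\times C^2([0,1];\mathbb{R}^n)$ satisfying $$p_1\sum_{i=1}^nd_i\Big(-y_i'\sum_{k=1}^nd_ky_k'+y_i'^2\Big)\Big|_{r=0}=(d-1)\lambda,$$ $$-p_2\,y_i'\sum_{k=1}^nd_ky_k'-y_i''=p_2\lambda\ \text{ on }[0,1]\ (i=1,\dots,n),\qquad y(0)=0,\quad y(1)=0,$$ is $(\lambda,y)=(0,0)$.
   Context: This is the system obtained, for parameters $t\in[0,1/2]$, from a homotopy with $p_1(t)=\min(\max(4t,0),1)$, $p_2(t)=\min(\max(4t-1,0),1)$, $p_3=p_4=0$; the pairs $(p_1(t),p_2(t))$ for $t\in[0,1/2]$ are exactly those listed. *)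

theory Defs
  imports Complex_Main
begin

definition C2_on01 :: "(real \<Rightarrow> real) \<Rightarrow> (real \<Rightarrow> real) \<Rightarrow> (real \<Rightarrow> real) \<Rightarrow> bool" where
  "C2_on01 u u1 u2 \<longleftrightarrow>
     (\<forall>r\<in>{0..1}. (u has_real_derivative u1 r) (at r within {0..1})) \<and>
     (\<forall>r\<in>{0..1}. (u1 has_real_derivative u2 r) (at r within {0..1})) \<and>
     continuous_on {0..1} u2"

text \<open>(lam, y) solves the boundary value problem; y = (y_0, ..., y_{n-1}),
  components indexed by i < n, y i r is the value of the i-th component at r.\<close>
definition is_solution ::
  "nat \<Rightarrow> (nat \<Rightarrow> nat) \<Rightarrow> real \<Rightarrow> real \<Rightarrow> real \<Rightarrow> (nat \<Rightarrow> real \<Rightarrow> real) \<Rightarrow> bool" where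
  "is_solution n d p1 p2 lam y \<longleftrightarrow>
     (\<exists>y1 y2.
        (\<forall>i<n. C2_on01 (y i) (y1 i) (y2 i)) \<and>
        p1 * (\<Sum>i<n. real (d i) *
                 (- y1 i 0 * (\<Sum>k<n. real (d k) * y1 k 0) + (y1 i 0)\<^sup>2))
          = (real (\<Sum>i<n. d i) - 1) * lam \<and>
        (\<forall>i<n. \<forall>r\<in>{0..1}.
           - p2 * y1 i r * (\<Sum>k<n. real (d k) * y1 k r) - y2 i r = p2 * lam) \<and>
        (\<forall>i<n. y i 0 = 0 \<and> y i 1 = 0))"

end

theory Submission
  imports Defs "HOL-Analysis.Analysis"
begin

lemma zc:
  assumes "\<And>r. r \<in> {0..1} \<Longrightarrow> (g has_real_derivative 0) (at r within {0..1})"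
    and "r \<in> {0..1::real}"
  shows "g r = g 0"
proof -
  obtain c where "\<forall>x\<in>{0..1::real}. g x = c"
    using has_field_derivative_zero_constant[of "{0..1::real}" g] assms(1) by auto
  then show ?thesis using assms(2) by auto
qed

lemma dexp:
  assumes a: "(f has_real_derivative D) (at x within S)"
    and b: "(g has_real_derivative E) (at x within S)"
  shows "((\<lambda>x. f x * exp (g x)) has_real_derivative (D * exp (g x) + f x * (exp (g x) * E))) (at x within S)"
proof -
  have X: "((\<lambda>x. f x * exp (g x)) has_real_derivative (D * exp (g x) + (exp (g x) * E) * f x)) (at x within S)"
    by (rule DERIV_mult[OF a DERIV_chain2[OF DERIV_exp b]])
  have eq: "D * exp (g x) + (exp (g x) * E) * f x = D * exp (g x) + f x * (exp (g x) * E)"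
    by (simp only: mult.commute)
  show ?thesis using X unfolding eq .
qed

lemma deriv_interior:
  assumes "(f has_real_derivative D) (at x within {0..1})" "0 < x" "x < 1"
  shows "(f has_real_derivative D) (at x)"
  using assms at_within_Icc_at[of 0 x 1] by simp

theorem lemma4p2:
  fixes n :: nat and d :: "nat \<Rightarrow> nat" and p1 p2 :: real
  assumes "\<forall>i<n. d i > 0"
    and "(\<Sum>i<n. d i) \<ge> 2"
    and "(\<exists>s\<in>{0..1}. p1 = s \<and> p2 = 0) \<or> (\<exists>s\<in>{0<..1}. p1 = 1 \<and> p2 = s)"
  shows "\<forall>lam y. is_solution n d p1 p2 lam y \<longleftrightarrow>
           (lam = 0 \<and> (\<forall>i<n. \<forall>r\<in>{0..1}. y i r = 0))"
proof (intro allI iffI)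
  fix lam :: real and y :: "nat \<Rightarrow> real \<Rightarrow> real"
  assume "is_solution n d p1 p2 lam y"
  then obtain y1 y2 where C2: "\<forall>i<n. C2_on01 (y i) (y1 i) (y2 i)"
    and bc0: "p1 * (\<Sum>i<n. real (d i) *
                 (- y1 i 0 * (\<Sum>k<n. real (d k) * y1 k 0) + (y1 i 0)\<^sup>2))
          = (real (\<Sum>i<n. d i) - 1) * lam"
    and ode: "\<forall>i<n. \<forall>r\<in>{0..1}.
           - p2 * y1 i r * (\<Sum>k<n. real (d k) * y1 k r) - y2 i r = p2 * lam"
    and bd: "\<forall>i<n. y i 0 = 0 \<and> y i 1 = 0"
    unfolding is_solution_def by blast
  have dy: "\<And>i r. i < n \<Longrightarrow> r \<in> {0..1} \<Longrightarrow> (y i has_real_derivative y1 i r) (at r within {0..1})"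
    using C2 unfolding C2_on01_def by blast
  have d2y: "\<And>i r. i < n \<Longrightarrow> r \<in> {0..1} \<Longrightarrow> (y1 i has_real_derivative y2 i r) (at r within {0..1})"
    using C2 unfolding C2_on01_def by blast
  define D where "D = real (\<Sum>i<n. d i)"
  have D2: "D \<ge> 2" using assms(2) unfolding D_def by linarith
  have ylin: "\<And>i r c. i < n \<Longrightarrow> r \<in> {0..1} \<Longrightarrow> (\<forall>t\<in>{0..1}. y1 i t = c) \<Longrightarrow> y i r = y i 0 + c * r"
  proof -
    fix i r c assume i: "i < n" and r: "r \<in> {0..1::real}" and c: "\<forall>t\<in>{0..1}. y1 i t = c"
    have "(\<lambda>t. y i t - c * t) r = (\<lambda>t. y i t - c * t) 0"
    proof (rule zc[OF _ r])
      fix t :: real assume t: "t \<in> {0..1}"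
      have "((\<lambda>t. y i t - c * t) has_real_derivative (y1 i t - c)) (at t within {0..1})"
        using DERIV_diff[OF dy[OF i t] DERIV_cmult[OF DERIV_ident, of c]] by simp
      then show "((\<lambda>t. y i t - c * t) has_real_derivative 0) (at t within {0..1})"
        using c t by simp
    qed
    then show "y i r = y i 0 + c * r" by simp
  qed
  from assms(3) consider (A) "p2 = 0" | (B) "p1 = 1" by auto
  then show "lam = 0 \<and> (\<forall>i<n. \<forall>r\<in>{0..1}. y i r = 0)"
  proof cases
    case A
    have u0: "\<And>i r. i < n \<Longrightarrow> r \<in> {0..1} \<Longrightarrow> y1 i r = y1 i 0"
    proof -
      fix i r assume i: "i < n" and r: "r \<in> {0..1::real}"
      show "y1 i r = y1 i 0"
      proof (rule zc[OF _ r])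
        fix t :: real assume t: "t \<in> {0..1}"
        have "y2 i t = 0" using ode i t A by auto
        then show "(y1 i has_real_derivative 0) (at t within {0..1})" using d2y[OF i t] by simp
      qed
    qed
    have yl: "y i r = y1 i 0 * r" if i: "i < n" and r: "r \<in> {0..1}" for i r
    proof -
      have "y i r = y i 0 + y1 i 0 * r" by (rule ylin[OF i r]) (use u0 i in blast)
      then show ?thesis using bd i by simp
    qed
    have z0: "\<And>i. i < n \<Longrightarrow> y1 i 0 = 0" using yl[of _ 1] bd by auto
    have "(D - 1) * lam = 0" using bc0 z0 unfolding D_def by simp
    then have "lam = 0" using D2 by simp
    then show ?thesis using yl z0 by simp
  next
    case B
    define s where "s = p2"
    define W where "W r = (\<Sum>k<n. real (d k) * y k r)" for r
    define w where "w r = (\<Sum>k<n. real (d k) * y1 k r)" for r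
    have dW: "\<And>r. r \<in> {0..1} \<Longrightarrow> (W has_real_derivative w r) (at r within {0..1})"
      unfolding W_def w_def by (rule DERIV_sum, rule DERIV_cmult, rule dy) auto
    have y2e: "\<And>i r. i < n \<Longrightarrow> r \<in> {0..1} \<Longrightarrow> y2 i r = - s * y1 i r * w r - s * lam"
      using ode unfolding s_def w_def by force
    have eq: "y1 i r = y1 j r" if i: "i < n" and j: "j < n" and r: "r \<in> {0..1}" for i j r
    proof -
      define g where "g t = (y1 i t - y1 j t) * exp (s * W t)" for t
      have gc: "g t = g 0" if t: "t \<in> {0..1}" for t
      proof (rule zc[OF _ t])
        fix t :: real assume t: "t \<in> {0..1}"
        have "(g has_real_derivative ((y2 i t - y2 j t) * exp (s * W t)
                + (y1 i t - y1 j t) * (exp (s * W t) * (s * w t)))) (at t within {0..1})"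
          unfolding g_def
          by (rule dexp[OF DERIV_diff[OF d2y[OF i t] d2y[OF j t]] DERIV_cmult[OF dW[OF t]]])
        moreover have "(y2 i t - y2 j t) * exp (s * W t)
                + (y1 i t - y1 j t) * (exp (s * W t) * (s * w t)) = 0"
          by (simp add: y2e[OF i t] y2e[OF j t] algebra_simps)
        ultimately show "(g has_real_derivative 0) (at t within {0..1})" by simp
      qed
      have "\<exists>z. 0 < z \<and> z < 1 \<and> (\<lambda>v. (y1 i z - y1 j z) * v) = (\<lambda>v. 0)"
      proof (rule Rolle_deriv[of 0 1 "\<lambda>t. y i t - y j t"])
        show "y i 0 - y j 0 = y i 1 - y j 1" using bd i j by simp
        show "continuous_on {0..1} (\<lambda>t. y i t - y j t)"
          by (rule DERIV_continuous_on[where D="\<lambda>t. y1 i t - y1 j t"])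
             (rule DERIV_diff[OF dy[OF i] dy[OF j]]; simp)
        fix x :: real assume x: "0 < x" "x < 1"
        have "((\<lambda>t. y i t - y j t) has_real_derivative (y1 i x - y1 j x)) (at x within {0..1})"
          using x by (intro DERIV_diff dy i j) auto
        then have "((\<lambda>t. y i t - y j t) has_real_derivative (y1 i x - y1 j x)) (at x)"
          using deriv_interior x by blast
        then show "((\<lambda>t. y i t - y j t) has_derivative (\<lambda>v. (y1 i x - y1 j x) * v)) (at x)"
          unfolding has_field_derivative_def .
      qed simp
      then obtain z where z: "0 < z" "z < 1" "(\<lambda>v. (y1 i z - y1 j z) * v) = (\<lambda>v. 0)" by blast
      from fun_cong[OF z(3), of 1] have "y1 i z = y1 j z" by simp
      then have "g z = 0" unfolding g_def by simp
      then have "g r = 0" using gc[of z] gc[OF r] z by simp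
      then show ?thesis unfolding g_def by simp
    qed
    have n0: "0 < n"
    proof (rule ccontr)
      assume "\<not> 0 < n" then have "n = 0" by simp
      then show False using assms(2) by simp
    qed
    define u where "u = y1 0"
    define u0 where "u0 = u 0"
    have uu: "\<And>i r. i < n \<Longrightarrow> r \<in> {0..1} \<Longrightarrow> y1 i r = u r"
      using eq n0 unfolding u_def by blast
    have wD: "w r = D * u r" if r: "r \<in> {0..1}" for r
    proof -
      have "w r = (\<Sum>k<n. real (d k) * u r)" unfolding w_def
        by (rule sum.cong) (use uu r in auto)
      also have "\<dots> = D * u r" unfolding D_def by (simp add: sum_distrib_right)
      finally show ?thesis .
    qed
    have "(\<Sum>i<n. real (d i) * (- y1 i 0 * (\<Sum>k<n. real (d k) * y1 k 0) + (y1 i 0)\<^sup>2))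
        = (\<Sum>i<n. real (d i) * (- u0 * (D * u0) + u0\<^sup>2))"
    proof (rule sum.cong)
      fix i assume "i \<in> {..<n}"
      then show "real (d i) * (- y1 i 0 * (\<Sum>k<n. real (d k) * y1 k 0) + (y1 i 0)\<^sup>2)
          = real (d i) * (- u0 * (D * u0) + u0\<^sup>2)"
        using uu[of i 0] wD[of 0] unfolding w_def u0_def by simp
    qed simp
    also have "\<dots> = D * (- u0 * (D * u0) + u0\<^sup>2)" unfolding D_def by (simp add: sum_distrib_right)
    finally have "D * (- u0 * (D * u0) + u0\<^sup>2) = (D - 1) * lam"
      using bc0 B unfolding D_def by simp
    then have "(D - 1) * (lam + D * u0\<^sup>2) = 0" by algebra
    then have lamE: "lam = - D * u0\<^sup>2" using D2 by simp
    have ucon: "u r = u0" if r: "r \<in> {0..1}" for r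
    proof -
      define g where "g t = (u t - u0) * exp (s * D * (y 0 t + u0 * t))" for t
      have gc: "g t = g 0" if t: "t \<in> {0..1}" for t
      proof (rule zc[OF _ t])
        fix t :: real assume t: "t \<in> {0..1}"
        have "(g has_real_derivative ((y2 0 t - 0) * exp (s * D * (y 0 t + u0 * t))
                + (u t - u0) * (exp (s * D * (y 0 t + u0 * t)) * (s * D * (y1 0 t + u0 * 1)))))
               (at t within {0..1})"
          unfolding g_def u_def
          by (rule dexp[OF DERIV_diff[OF d2y[OF n0 t] DERIV_const] DERIV_cmult[OF DERIV_add[OF dy[OF n0 t] DERIV_cmult[OF DERIV_ident]]]])
        moreover have "(y2 0 t - 0) * exp (s * D * (y 0 t + u0 * t))
                + (u t - u0) * (exp (s * D * (y 0 t + u0 * t)) * (s * D * (y1 0 t + u0 * 1))) = 0"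
          by (simp add: y2e[OF n0 t] wD[OF t] lamE u_def algebra_simps power2_eq_square)
        ultimately show "(g has_real_derivative 0) (at t within {0..1})" by simp
      qed
      have "g 0 = 0" unfolding g_def u0_def by simp
      then have "g r = 0" using gc[OF r] by simp
      then show ?thesis unfolding g_def by simp
    qed
    have "y 0 1 = y 0 0 + u0 * 1"
    proof (rule ylin[OF n0])
      show "(1::real) \<in> {0..1}" by simp
      show "\<forall>t\<in>{0..1}. y1 0 t = u0" using ucon unfolding u_def by blast
    qed
    then have u00: "u0 = 0" using bd n0 by simp
    have "lam = 0" using lamE u00 by simp
    moreover have "\<forall>i<n. \<forall>r\<in>{0..1}. y i r = 0"
    proof (intro allI impI ballI)
      fix i r assume i: "i < n" and r: "r \<in> {0..1::real}"
      have "y i r = y i 0 + 0 * r" 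
      proof (rule ylin[OF i r])
        show "\<forall>t\<in>{0..1}. y1 i t = 0" using uu[OF i] ucon u00 by simp
      qed
      then show "y i r = 0" using bd i by simp
    qed
    ultimately show ?thesis by simp
  qed
next
  fix lam :: real and y :: "nat \<Rightarrow> real \<Rightarrow> real"
  assume h: "lam = 0 \<and> (\<forall>i<n. \<forall>r\<in>{0..1}. y i r = 0)"
  have "C2_on01 (y i) (\<lambda>r. 0) (\<lambda>r. 0)" if i: "i < n" for i
    unfolding C2_on01_def
  proof (intro conjI ballI)
    fix r :: real assume r: "r \<in> {0..1}"
    show "(y i has_real_derivative 0) (at r within {0..1})"
      by (rule has_field_derivative_transform_within[where f="\<lambda>_. 0" and d=1])
         (use h i r in auto)
  qed auto
  then show "is_solution n d p1 p2 lam y"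
    unfolding is_solution_def using h
    by (intro exI[of _ "\<lambda>i r. 0"] exI[of _ "\<lambda>i r. 0"]) auto
qed

end
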